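(* Consider a linear pentapod of Type 1 or Type 2 with fixed geometric parameters $A\neq0$, $C$, $a_r$, $a_c\neq0$, $a_4$, and any leg parameters satisfying (SM1)–(SM2). For real $t$, let $\mathfrak p_t$ denote the point of $\mathfrak p$ with parameter $t$, and let $\mathbf P_t=\Big(\frac{A(a_r^2+a_c^2-ta_r)}{(t-a_r)^2+a_c^2},\,-\frac{Aa_ct}{(t-a_r)^2+a_c^2},\,\frac{Ca_4}{a_4-t}\Big)^T$. Let $\mathfrak C$ be the point $\mathbf P_c$ with $c=\frac{a_4^2-a_c^2-a_r^2}{2(a_4-a_r)}$ if $a_4\neq a_r$, and $\mathfrak C=\mathfrak M_5=(0,0,0)$ if $a_4=a_r$. Then for every $t\in\mathbb R\setminus\{a_4\}$, in every real pose of the self-motion the image of $\mathfrak p_t$ lies on the ellipsoid of rotation with center $\mathfrak C$, axis of rotation parallel to the $z$-axis of the fixed frame, semi-axis $|a_4-t|$ along this axis and equator radius $\sqrt{(a_r-t)^2+a_c^2}$; moreover $\mathfrak p_t$ runs on a sphere centered at $\mathbf P_t$ (a plane if $\mathbf P_t$ is ideal). For $t=a_4$, the image of $\mathfrak p_{a_4}$ lies in the plane $z=p_4$ on a circular disc centered at $\mathfrak C$. For $a_4\neq a_r$ the only one of these ellipsoids that is a sphere is the one for $t=c$; for $a_4=a_r$ none is a sphere.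
   Context: Euclidean displacements $\mathbf x\mapsto \mathbf R\mathbf x+\mathbf s$ (rows $\mathbf r_j$ of $\mathbf R$). Fixed frame: $\mathfrak M_5=(0,0,0)$, $\mathfrak M_1=(A,0,C)$, $A\ne0$; $\mathfrak M_2,\mathfrak M_3,\mathfrak M_4$ ideal points in directions $(1,i,0)^T,(1,-i,0)^T,(0,0,1)^T$. Platform line $\mathfrak p$: point with parameter $t$ is $\mathbf n+(t-a_r)\mathbf d$ ($\mathbf d$ unit vector); $\mathfrak m_j$ has parameter $a_j$ with $a_1=0$, $a_2=a_r+ia_c$, $a_3=a_r-ia_c$, $a_4\in\mathbb R$, $a_r,a_c\in\mathbb R$, $a_c\ne0$. Leg constraints: $\|\mathbf R\mathbf m_1+\mathbf s-\mathbf M_1\|^2=R_1^2$; $(s_1+\mathbf r_1\mathbf m_2)-i(s_2+\mathbf r_2\mathbf m_2)=p_2$; $(s_1+\mathbf r_1\mathbf m_3)+i(s_2+\mathbf r_2\mathbf m_3)=p_3$; $s_3+\mathbf r_3\mathbf m_4=p_4$; $(\mathbf R\mathbf d)\cdot(\mathbf s+\mathbf R(\mathbf n+(p_5-a_r)\mathbf d))=0$. With $v=a_2+a_3-2a_4$, $w=a_2a_3-a_4^2$, the self-motion conditions are (SM1) $p_2=\frac{Aa_3v}{(a_3-a_4)^2}$, $p_3=\frac{Aa_2v}{(a_2-a_4)^2}$, $p_4=-\frac{Ca_4v}{(a_2-a_4)(a_3-a_4)}$ and (SM2) $(a_2-a_4)^2(a_3-a_4)^2[2wp_5-vR_1^2-(2w-va_4)a_4]+vw^2(A^2+C^2)=0$;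 the self-motion is the one-parameter set of poses of $\mathfrak p$ satisfying all five constraints. Type 1: $a_4\ne0\ne C$; Type 2: $a_4=0=C$. *)

theory Defs
  imports "HOL-Analysis.Analysis"
begin

definition vec3 :: "'a \<Rightarrow> 'a \<Rightarrow> 'a \<Rightarrow> 'a^3" where
  "vec3 x y z = (\<chi> i. if i = 1 then x else if i = 2 then y else z)"

definition cdot :: "real^3 \<Rightarrow> complex^3 \<Rightarrow> complex" where
  "cdot r m = (\<Sum>i\<in>UNIV. complex_of_real (r $ i) * m $ i)"

text \<open>Point of the platform line with (possibly complex) parameter t:
  n + (t - a_r) d.\<close>
definition cline_pt :: "real^3 \<Rightarrow> real^3 \<Rightarrow> real \<Rightarrow> complex \<Rightarrow> complex^3" where
  "cline_pt n d ar t = (\<chi> i. complex_of_real (n $ i) + (t - complex_of_real ar) * complex_of_real (d $ i))"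

definition line_pt :: "real^3 \<Rightarrow> real^3 \<Rightarrow> real \<Rightarrow> real \<Rightarrow> real^3" where
  "line_pt n d ar t = n + (t - ar) *\<^sub>R d"

text \<open>Real pose (Rot, s) of the self-motion: Rot a proper rotation and all five
  leg constraints hold. Parameters a_1 = 0, a_2 = a_r + i a_c, a_3 = a_r - i a_c, a_4.\<close>
definition in_self_motion ::
  "real \<Rightarrow> real \<Rightarrow> real \<Rightarrow> real \<Rightarrow> real \<Rightarrow> real^3 \<Rightarrow> real^3 \<Rightarrow>
   real \<Rightarrow> complex \<Rightarrow> complex \<Rightarrow> real \<Rightarrow> real \<Rightarrow> real^3^3 \<Rightarrow> real^3 \<Rightarrow> bool" where
  "in_self_motion A C ar ac a4 n d R1 p2 p3 p4 p5 Rot s \<longleftrightarrow>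
     orthogonal_matrix Rot \<and> det Rot = 1 \<and>
     (let a2 = Complex ar ac; a3 = Complex ar (- ac);
          m1 = line_pt n d ar 0; m2 = cline_pt n d ar a2; m3 = cline_pt n d ar a3;
          m4 = line_pt n d ar a4 in
       (norm (Rot *v m1 + s - vec3 A 0 C))\<^sup>2 = R1\<^sup>2 \<and>
       (complex_of_real (s $ 1) + cdot (Rot $ 1) m2) - \<i> * (complex_of_real (s $ 2) + cdot (Rot $ 2) m2) = p2 \<and>
       (complex_of_real (s $ 1) + cdot (Rot $ 1) m3) + \<i> * (complex_of_real (s $ 2) + cdot (Rot $ 2) m3) = p3 \<and>
       s $ 3 + (Rot $ 3) \<bullet> m4 = p4 \<and>
       (Rot *v d) \<bullet> (s + Rot *v (n + (p5 - ar) *\<^sub>R d)) = 0)"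

definition rot_ellipsoid :: "real^3 \<Rightarrow> real \<Rightarrow> real \<Rightarrow> (real^3) set" where
  "rot_ellipsoid ctr h rho =
     {x. ((x $ 1 - ctr $ 1)\<^sup>2 + (x $ 2 - ctr $ 2)\<^sup>2) / rho\<^sup>2 + (x $ 3 - ctr $ 3)\<^sup>2 / h\<^sup>2 = 1}"

definition Ppt :: "real \<Rightarrow> real \<Rightarrow> real \<Rightarrow> real \<Rightarrow> real \<Rightarrow> real \<Rightarrow> real^3" where
  "Ppt A C ar ac a4 t =
     vec3 (A * (ar\<^sup>2 + ac\<^sup>2 - t * ar) / ((t - ar)\<^sup>2 + ac\<^sup>2))
          (- (A * ac * t / ((t - ar)\<^sup>2 + ac\<^sup>2)))
          (C * a4 / (a4 - t))"

definition center_pt :: "real \<Rightarrow> real \<Rightarrow> real \<Rightarrow> real \<Rightarrow> real \<Rightarrow> real^3" where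
  "center_pt A C ar ac a4 =
     (if a4 \<noteq> ar then Ppt A C ar ac a4 ((a4\<^sup>2 - ac\<^sup>2 - ar\<^sup>2) / (2 * (a4 - ar))) else 0)"

end

theory Submission
  imports Defs
begin


lemma vec3_comp[simp]: "vec3 x y z $ 1 = x" "vec3 x y z $ 2 = y" "vec3 x y z $ 3 = z"
  by (simp_all add: vec3_def)

lemma norm3_sq: "(norm (x::real^3))\<^sup>2 = (x$1)\<^sup>2 + (x$2)\<^sup>2 + (x$3)\<^sup>2"
  unfolding power2_norm_eq_inner inner_vec_def sum_3 by (simp add: power2_eq_square)

lemma orth_norm: assumes "orthogonal_matrix (Rot::real^3^3)" shows "norm (Rot *v d) = norm d"
proof -
  have "orthogonal_transformation ((*v) Rot)"
    using assms by (simp add: orthogonal_transformation_matrix matrix_vector_mul_linear matrix_of_matrix_vector_mul)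
  then show ?thesis by (simp add: orthogonal_transformation_norm)
qed

lemma cdot_cline: "cdot r (cline_pt n d ar t) = complex_of_real (r \<bullet> n) + (t - complex_of_real ar) * complex_of_real (r \<bullet> d)"
  by (simp add: cdot_def cline_pt_def sum_3 inner_vec_def algebra_simps)

lemma reduce:
  assumes "in_self_motion A C ar ac a4 n d R1 p2 p3 p4 p5 Rot s" and "norm d = 1"
  obtains x y z e1 e2 e3 where
    "e1\<^sup>2 + e2\<^sup>2 + e3\<^sup>2 = 1"
    "\<And>t. Rot *v line_pt n d ar t + s = vec3 (x + (t-ar)*e1) (y + (t-ar)*e2) (z + (t-ar)*e3)"
    "x + ac*e2 = Re p2" "ac*e1 - y = Im p2" "z + (a4-ar)*e3 = p4"
    "(x - ar*e1 - A)\<^sup>2 + (y - ar*e2)\<^sup>2 + (z - ar*e3 - C)\<^sup>2 = R1\<^sup>2"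
    "e1*(x + (p5-ar)*e1) + e2*(y + (p5-ar)*e2) + e3*(z + (p5-ar)*e3) = 0"
proof -
  define q where "q = Rot *v n + s"
  define e where "e = Rot *v d"
  have orth: "orthogonal_matrix Rot" and
    c1: "(norm (Rot *v line_pt n d ar 0 + s - vec3 A 0 C))\<^sup>2 = R1\<^sup>2" and
    c2: "(complex_of_real (s $ 1) + cdot (Rot $ 1) (cline_pt n d ar (Complex ar ac))) - \<i> * (complex_of_real (s $ 2) + cdot (Rot $ 2) (cline_pt n d ar (Complex ar ac))) = p2" and
    c4: "s $ 3 + (Rot $ 3) \<bullet> line_pt n d ar a4 = p4" and
    c5: "(Rot *v d) \<bullet> (s + Rot *v (n + (p5 - ar) *\<^sub>R d)) = 0"
    using assms(1) unfolding in_self_motion_def Let_def by auto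
  have lp: "Rot *v line_pt n d ar t + s = vec3 (q$1 + (t-ar)*e$1) (q$2 + (t-ar)*e$2) (q$3 + (t-ar)*e$3)" for t
    by (simp add: line_pt_def q_def e_def vec_eq_iff forall_3 algebra_simps)
  have "norm e = 1" using orth_norm[OF orth] assms(2) e_def by simp
  then have n1: "(e$1)\<^sup>2 + (e$2)\<^sup>2 + (e$3)\<^sup>2 = 1" using norm3_sq[of e] by simp
  have r1: "Rot$1 \<bullet> n = (Rot *v n)$1" "Rot$2 \<bullet> n = (Rot *v n)$2" "Rot$3 \<bullet> n = (Rot *v n)$3"
     "Rot$1 \<bullet> d = e$1" "Rot$2 \<bullet> d = e$2" "Rot$3 \<bullet> d = e$3"
    by (simp_all add: matrix_vector_mul_component e_def)
  have "Complex (q$1 + ac*e$2) (ac*e$1 - q$2) = p2"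
    using c2 unfolding cdot_cline r1 by (simp add: q_def complex_eq_iff algebra_simps)
  then have h2: "q$1 + ac*e$2 = Re p2" "ac*e$1 - q$2 = Im p2" by auto
  have h4: "q$3 + (a4-ar)*e$3 = p4"
    using c4 by (simp add: q_def line_pt_def inner_add_right r1 algebra_simps)
  have h1: "(q$1 - ar*e$1 - A)\<^sup>2 + (q$2 - ar*e$2)\<^sup>2 + (q$3 - ar*e$3 - C)\<^sup>2 = R1\<^sup>2"
    using c1 unfolding lp norm3_sq by simp
  have h5: "e$1*(q$1 + (p5-ar)*e$1) + e$2*(q$2 + (p5-ar)*e$2) + e$3*(q$3 + (p5-ar)*e$3) = 0"
    using c5 by (simp add: q_def e_def inner_vec_def sum_3 algebra_simps)
  show ?thesis using that[OF n1 lp h2 h4 h1 h5] .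
qed



lemma center_eq:
  fixes A C ar ac a4 p4 :: real and p2 :: complex
  assumes hac: "ac \<noteq> 0"
    and hSM1: "let a2 = Complex ar ac; a3 = Complex ar (- ac); a4' = complex_of_real a4;
                   v = a2 + a3 - 2 * a4' in
                 p2 = complex_of_real A * a3 * v / (a3 - a4')\<^sup>2 \<and>
                 p3 = complex_of_real A * a2 * v / (a2 - a4')\<^sup>2 \<and>
                 complex_of_real p4 = - (complex_of_real C * a4' * v / ((a2 - a4') * (a3 - a4')))"
  shows "center_pt A C ar ac a4 = vec3 (Re p2) (- Im p2) p4"
proof -
  have v: "Complex ar ac + Complex ar (- ac) - 2 * complex_of_real a4 = complex_of_real (2*(ar - a4))"
    by (simp add: complex_eq_iff)
  have dd: "(Complex ar ac - complex_of_real a4) * (Complex ar (- ac) - complex_of_real a4)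
         = complex_of_real ((ar-a4)\<^sup>2 + ac\<^sup>2)"
    by (simp add: complex_eq_iff power2_eq_square algebra_simps)
  have D: "(ar-a4)\<^sup>2 + ac\<^sup>2 > 0" using hac by (simp add: add_nonneg_pos)
  have p2: "p2 = complex_of_real A * Complex ar (- ac) * complex_of_real (2*(ar - a4)) / (Complex ar (- ac) - complex_of_real a4)\<^sup>2"
    and p4c: "complex_of_real p4 = - (complex_of_real C * complex_of_real a4 * complex_of_real (2*(ar - a4)) / complex_of_real ((ar-a4)\<^sup>2 + ac\<^sup>2))"
    using hSM1 unfolding Let_def v dd by auto
  have p4: "p4 = - (C * a4 * (2*(ar - a4)) / ((ar-a4)\<^sup>2 + ac\<^sup>2))"
    using p4c by (metis of_real_eq_iff of_real_minus of_real_mult of_real_divide)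
  show ?thesis
  proof (cases "a4 = ar")
    case True
    then show ?thesis using p2 p4 by (simp add: center_pt_def vec_eq_iff forall_3)
  next
    case False
    define c where "c = (a4\<^sup>2 - ac\<^sup>2 - ar\<^sup>2) / (2 * (a4 - ar))"
    have F: "a4 - ar \<noteq> 0" using False by simp
    have Dc: "(c-ar)\<^sup>2 + ac\<^sup>2 > 0" using hac by (simp add: add_nonneg_pos)
    define g where "g = a4 - ar"
    define D where "D = g\<^sup>2 + ac\<^sup>2"
    have Dp: "D > 0" using hac by (simp add: D_def add_nonneg_pos)
    have g0: "g \<noteq> 0" using F g_def by simp
    have cg: "2*g*c = a4\<^sup>2 - ac\<^sup>2 - ar\<^sup>2" unfolding c_def g_def using F by simp
    have ac4: "2*g*(a4 - c) = D" unfolding D_def using cg g_def by algebra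
    have z3: "C * a4 / (a4 - c) = p4"
    proof -
      have ee: "a4 - c = D/(2*g)" using ac4 g0 by (simp add: eq_divide_eq mult.commute)
      have "C * a4 / (a4 - c) = 2*g*C*a4/D" unfolding ee using g0 Dp by (simp add: field_simps)
      also have "\<dots> = (- (C * a4 * (2*(ar - a4)))) / ((ar-a4)\<^sup>2 + ac\<^sup>2)"
        by (simp add: g_def D_def power2_commute[of a4 ar] algebra_simps)
      also have "\<dots> = p4" unfolding p4 by (rule minus_divide_left[symmetric])
      finally show ?thesis .
    qed
    define X where "X = A * (ar\<^sup>2 + ac\<^sup>2 - c * ar) / ((c - ar)\<^sup>2 + ac\<^sup>2)"
    define Y where "Y = A * ac * c / ((c - ar)\<^sup>2 + ac\<^sup>2)"
    have "Complex ar (- ac) - complex_of_real a4 \<noteq> 0" using hac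
      by (simp add: complex_eq_iff)
    then have Dn: "(Complex ar (- ac) - complex_of_real a4)\<^sup>2 \<noteq> 0" by simp
    have "Complex X Y * (Complex ar (- ac) - complex_of_real a4)\<^sup>2 = complex_of_real A * Complex ar (- ac) * complex_of_real (2*(ar - a4))"
    proof -
      have cd0: "4*g\<^sup>2*((c-ar)\<^sup>2 + ac\<^sup>2) = D\<^sup>2"
        unfolding D_def using cg g_def by algebra
      have cd: "(c-ar)\<^sup>2 + ac\<^sup>2 = D\<^sup>2/(4*g\<^sup>2)"
        using cd0 g0 by (simp add: field_simps)
      define NX where "NX = 4*g\<^sup>2*A*(ar\<^sup>2 + ac\<^sup>2 - c * ar)"
      define NY where "NY = 4*g\<^sup>2*A*ac*c"
      have XX: "X = NX / D\<^sup>2" unfolding X_def cd NX_def using g0 Dp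
        by (simp add: field_simps)
      have YY: "Y = NY / D\<^sup>2" unfolding Y_def cd NY_def using g0 Dp
        by (simp add: field_simps)
      have e1': "NX * ((ar-a4)\<^sup>2 - ac\<^sup>2) + NY * (2*(ar-a4)*ac) = A*ar*(2*(ar - a4)) * D\<^sup>2"
        unfolding NX_def NY_def D_def using cg g_def by algebra
      have e2': "NY * ((ar-a4)\<^sup>2 - ac\<^sup>2) - NX * (2*(ar-a4)*ac) = -A*ac*(2*(ar - a4)) * D\<^sup>2"
        unfolding NX_def NY_def D_def using cg g_def by algebra
      have e1: "X * ((ar-a4)\<^sup>2 - ac\<^sup>2) + Y * (2*(ar-a4)*ac) = A*ar*(2*(ar - a4))"
      proof -
        have "X * ((ar-a4)\<^sup>2 - ac\<^sup>2) + Y * (2*(ar-a4)*ac) = (NX * ((ar-a4)\<^sup>2 - ac\<^sup>2) + NY * (2*(ar-a4)*ac)) / D\<^sup>2"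
          unfolding XX YY by (simp add: add_divide_distrib)
        then show ?thesis unfolding e1' using Dp by simp
      qed
      have e2: "Y * ((ar-a4)\<^sup>2 - ac\<^sup>2) - X * (2*(ar-a4)*ac) = -A*ac*(2*(ar - a4))"
      proof -
        have "Y * ((ar-a4)\<^sup>2 - ac\<^sup>2) - X * (2*(ar-a4)*ac) = (NY * ((ar-a4)\<^sup>2 - ac\<^sup>2) - NX * (2*(ar-a4)*ac)) / D\<^sup>2"
          unfolding XX YY by (simp add: diff_divide_distrib)
        then show ?thesis unfolding e2' using Dp by simp
      qed
      show ?thesis using e1 e2 by (simp add: complex_eq_iff power2_eq_square algebra_simps)
    qed
    then have "Complex X Y = complex_of_real A * Complex ar (- ac) * complex_of_real (2*(ar - a4)) / (Complex ar (- ac) - complex_of_real a4)\<^sup>2"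
      using Dn by (simp add: eq_divide_eq)
    then have "p2 = Complex X Y" using p2 by simp
    moreover have "center_pt A C ar ac a4 = Ppt A C ar ac a4 c" using F by (simp add: center_pt_def c_def)
    ultimately show ?thesis using z3
      by (simp add: Ppt_def vec_eq_iff forall_3 X_def Y_def)
  qed
qed



lemma dist3_sq: "(dist (x::real^3) y)\<^sup>2 = (x$1 - y$1)\<^sup>2 + (x$2 - y$2)\<^sup>2 + (x$3 - y$3)\<^sup>2"
  by (simp add: dist_norm norm3_sq)

lemma ell_sphere:
  assumes h: "h > 0" and r: "rho > 0"
  shows "(\<exists>c r. rot_ellipsoid ctr h rho = sphere c r) \<longleftrightarrow> h = rho"
proof
  assume "\<exists>c r. rot_ellipsoid ctr h rho = sphere c r"
  then obtain c rr where E: "rot_ellipsoid ctr h rho = sphere c rr" by blast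
  have mem: "dist c p = rr" if "p \<in> rot_ellipsoid ctr h rho" for p
    using that E by auto
  define a1 a2 a3 where "a1 = ctr$1" "a2 = ctr$2" "a3 = ctr$3"
  have d: "(c$1 - x1)\<^sup>2 + (c$2 - x2)\<^sup>2 + (c$3 - x3)\<^sup>2 = rr\<^sup>2"
    if "((x1 - a1)\<^sup>2 + (x2 - a2)\<^sup>2) / rho\<^sup>2 + (x3 - a3)\<^sup>2 / h\<^sup>2 = 1" for x1 x2 x3
  proof -
    have "vec3 x1 x2 x3 \<in> rot_ellipsoid ctr h rho" using that
      by (simp add: rot_ellipsoid_def a1_a2_a3_def)
    then have "dist c (vec3 x1 x2 x3) = rr" by (rule mem)
    then show ?thesis using dist3_sq[of c "vec3 x1 x2 x3"] by simp
  qed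
  have r2: "rho\<^sup>2 \<noteq> 0" "h\<^sup>2 \<noteq> 0" "rho \<noteq> 0" "h \<noteq> 0" using h r by auto
  have q1: "(c$1 - (a1+rho))\<^sup>2 + (c$2 - a2)\<^sup>2 + (c$3 - a3)\<^sup>2 = rr\<^sup>2" by (rule d) (simp add: r2)
  have q2: "(c$1 - (a1-rho))\<^sup>2 + (c$2 - a2)\<^sup>2 + (c$3 - a3)\<^sup>2 = rr\<^sup>2" by (rule d) (simp add: r2)
  have q3: "(c$1 - a1)\<^sup>2 + (c$2 - (a2+rho))\<^sup>2 + (c$3 - a3)\<^sup>2 = rr\<^sup>2" by (rule d) (simp add: r2)
  have q4: "(c$1 - a1)\<^sup>2 + (c$2 - (a2-rho))\<^sup>2 + (c$3 - a3)\<^sup>2 = rr\<^sup>2" by (rule d) (simp add: r2)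
  have q5: "(c$1 - a1)\<^sup>2 + (c$2 - a2)\<^sup>2 + (c$3 - (a3+h))\<^sup>2 = rr\<^sup>2" by (rule d) (simp add: r2)
  have q6: "(c$1 - a1)\<^sup>2 + (c$2 - a2)\<^sup>2 + (c$3 - (a3-h))\<^sup>2 = rr\<^sup>2" by (rule d) (simp add: r2)
  have "4*rho*(c$1 - a1) = 0" using q1 q2 by algebra
  then have c1: "c$1 = a1" using r by simp
  have "4*rho*(c$2 - a2) = 0" using q3 q4 by algebra
  then have c2: "c$2 = a2" using r by simp
  have "4*h*(c$3 - a3) = 0" using q5 q6 by algebra
  then have c3: "c$3 = a3" using h by simp
  have "rho\<^sup>2 = h\<^sup>2" using q1 q5 c1 c2 c3 by simp
  then show "h = rho" using h r by (simp add: power2_eq_iff)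
next
  assume hr: "h = rho"
  have "rot_ellipsoid ctr h rho = sphere ctr rho"
  proof (rule set_eqI)
    fix x
    have "x \<in> rot_ellipsoid ctr h rho \<longleftrightarrow> (dist ctr x)\<^sup>2 = rho\<^sup>2"
      using r unfolding rot_ellipsoid_def dist3_sq hr
      by (simp add: add_divide_distrib[symmetric] power2_commute) auto
    also have "\<dots> \<longleftrightarrow> dist ctr x = rho" using r by (simp add: power2_eq_iff_nonneg)
    finally show "x \<in> rot_ellipsoid ctr h rho \<longleftrightarrow> x \<in> sphere ctr rho" by simp
  qed
  then show "\<exists>c r. rot_ellipsoid ctr h rho = sphere c r" by blast
qed




lemma sph_alg:
  fixes e1 e2 e3 x y z al be p4 ac ar a4 A C R1 p5 P1 P2 P3 t :: real
  assumes n: "e1\<^sup>2 + e2\<^sup>2 + e3\<^sup>2 = 1" and h2a: "x + ac*e2 = al" and h2b: "ac*e1 - y = be"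
    and h4: "z + (a4-ar)*e3 = p4"
    and h1: "(x - ar*e1 - A)\<^sup>2 + (y - ar*e2)\<^sup>2 + (z - ar*e3 - C)\<^sup>2 = R1\<^sup>2"
    and h5: "e1*(x + (p5-ar)*e1) + e2*(y + (p5-ar)*e2) + e3*(z + (p5-ar)*e3) = 0"
    and P1r: "P1*(t-ar) + P2*ac = -A*ar" and P2r: "P2*(t-ar) - P1*ac = -A*ac"
    and P3r: "P3*(t-a4) = -C*a4"
  shows "(P1 - (x + (t-ar)*e1))\<^sup>2 + (P2 - (y + (t-ar)*e2))\<^sup>2 + (P3 - (z + (t-ar)*e3))\<^sup>2
     = R1\<^sup>2 - 2*(al*(P1-A) - be*P2 + p4*(P3-C)) + P1\<^sup>2 + P2\<^sup>2 + P3\<^sup>2 - A\<^sup>2 - C\<^sup>2 + t\<^sup>2 - 2*t*p5"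
  using assms by algebra




theorem mainTheorem2:
  fixes A C ar ac a4 R1 p4 p5 :: real
    and p2 p3 :: complex
    and n d :: "real^3"
  assumes hA: "A \<noteq> 0" and hac: "ac \<noteq> 0"
    and htype: "(a4 \<noteq> 0 \<and> C \<noteq> 0) \<or> (a4 = 0 \<and> C = 0)"
    and hd: "norm d = 1"
    and hSM1: "let a2 = Complex ar ac; a3 = Complex ar (- ac); a4' = complex_of_real a4;
                   v = a2 + a3 - 2 * a4' in
                 p2 = complex_of_real A * a3 * v / (a3 - a4')\<^sup>2 \<and>
                 p3 = complex_of_real A * a2 * v / (a2 - a4')\<^sup>2 \<and>
                 complex_of_real p4 = - (complex_of_real C * a4' * v / ((a2 - a4') * (a3 - a4')))"
    and hSM2: "let a2 = Complex ar ac; a3 = Complex ar (- ac); a4' = complex_of_real a4;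
                   v = a2 + a3 - 2 * a4'; w = a2 * a3 - a4'\<^sup>2 in
                 (a2 - a4')\<^sup>2 * (a3 - a4')\<^sup>2 *
                   (2 * w * complex_of_real p5 - v * complex_of_real (R1\<^sup>2) - (2 * w - v * a4') * a4')
                 + v * w\<^sup>2 * complex_of_real (A\<^sup>2 + C\<^sup>2) = 0"
  shows
    "(\<forall>t. t \<noteq> a4 \<longrightarrow>
        (\<forall>Rot s. in_self_motion A C ar ac a4 n d R1 p2 p3 p4 p5 Rot s \<longrightarrow>
           Rot *v line_pt n d ar t + s
             \<in> rot_ellipsoid (center_pt A C ar ac a4) \<bar>a4 - t\<bar> (sqrt ((ar - t)\<^sup>2 + ac\<^sup>2))) \<and>
        (\<exists>\<rho>. \<forall>Rot s. in_self_motion A C ar ac a4 n d R1 p2 p3 p4 p5 Rot s \<longrightarrow>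
           Rot *v line_pt n d ar t + s \<in> sphere (Ppt A C ar ac a4 t) \<rho>))
     \<and> (\<exists>\<rho>. \<forall>Rot s. in_self_motion A C ar ac a4 n d R1 p2 p3 p4 p5 Rot s \<longrightarrow>
           (Rot *v line_pt n d ar a4 + s) $ 3 = p4 \<and>
           dist (Rot *v line_pt n d ar a4 + s) (center_pt A C ar ac a4) \<le> \<rho>)
     \<and> (a4 \<noteq> ar \<longrightarrow>
          (\<forall>t. t \<noteq> a4 \<longrightarrow>
             ((\<exists>ctr r. rot_ellipsoid (center_pt A C ar ac a4) \<bar>a4 - t\<bar> (sqrt ((ar - t)\<^sup>2 + ac\<^sup>2))
                        = sphere ctr r)
              \<longleftrightarrow> t = (a4\<^sup>2 - ac\<^sup>2 - ar\<^sup>2) / (2 * (a4 - ar)))))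
     \<and> (a4 = ar \<longrightarrow>
          (\<forall>t. t \<noteq> a4 \<longrightarrow>
             \<not> (\<exists>ctr r. rot_ellipsoid (center_pt A C ar ac a4) \<bar>a4 - t\<bar> (sqrt ((ar - t)\<^sup>2 + ac\<^sup>2))
                        = sphere ctr r)))"
proof -
  have cen: "center_pt A C ar ac a4 = vec3 (Re p2) (- Im p2) p4" by (rule center_eq[OF hac hSM1])
  have rpos: "(ar - t)\<^sup>2 + ac\<^sup>2 > 0" for t using hac by (simp add: add_nonneg_pos)
  have ell: "Rot *v line_pt n d ar t + s
             \<in> rot_ellipsoid (center_pt A C ar ac a4) \<bar>a4 - t\<bar> (sqrt ((ar - t)\<^sup>2 + ac\<^sup>2))"
    if t: "t \<noteq> a4" and sm: "in_self_motion A C ar ac a4 n d R1 p2 p3 p4 p5 Rot s" for t Rot s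
  proof -
    obtain e1 e2 e3 x y z where n1: "e1\<^sup>2 + e2\<^sup>2 + e3\<^sup>2 = 1"
      and lp: "\<And>t. Rot *v line_pt n d ar t + s = vec3 (x + (t-ar)*e1) (y + (t-ar)*e2) (z + (t-ar)*e3)"
      and h2a: "x + ac*e2 = Re p2" and h2b: "ac*e1 - y = Im p2" and h4: "z + (a4-ar)*e3 = p4"
      and h1: "(x - ar*e1 - A)\<^sup>2 + (y - ar*e2)\<^sup>2 + (z - ar*e3 - C)\<^sup>2 = R1\<^sup>2"
      and h5: "e1*(x + (p5-ar)*e1) + e2*(y + (p5-ar)*e2) + e3*(z + (p5-ar)*e3) = 0"
      by (rule reduce[OF sm hd]) blast
    have a: "(x + (t-ar)*e1 - Re p2)\<^sup>2 + (y + (t-ar)*e2 - - Im p2)\<^sup>2 = ((ar - t)\<^sup>2 + ac\<^sup>2)*(e1\<^sup>2+e2\<^sup>2)"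
      unfolding h2a[symmetric] h2b[symmetric] by (simp add: power2_eq_square algebra_simps)
    have b: "(z + (t-ar)*e3 - p4)\<^sup>2 = (a4-t)\<^sup>2 * e3\<^sup>2" unfolding h4[symmetric] by (simp add: power2_eq_square algebra_simps)
    have t2: "(a4-t)\<^sup>2 > 0" using t by simp
    have "((x + (t-ar)*e1 - Re p2)\<^sup>2 + (y + (t-ar)*e2 - - Im p2)\<^sup>2) / (sqrt ((ar - t)\<^sup>2 + ac\<^sup>2))\<^sup>2
          + (z + (t-ar)*e3 - p4)\<^sup>2 / \<bar>a4 - t\<bar>\<^sup>2 = 1"
      unfolding a b using rpos[of t] t2 n1 hac by simp
    then show ?thesis unfolding rot_ellipsoid_def cen lp by (simp only: vec3_comp mem_Collect_eq)
  qed
  have sph: "\<exists>\<rho>. \<forall>Rot s. in_self_motion A C ar ac a4 n d R1 p2 p3 p4 p5 Rot s \<longrightarrow>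
           Rot *v line_pt n d ar t + s \<in> sphere (Ppt A C ar ac a4 t) \<rho>" if t: "t \<noteq> a4" for t
  proof -
    define P where "P = Ppt A C ar ac a4 t"
    have D0: "(t - ar)\<^sup>2 + ac\<^sup>2 \<noteq> 0" using rpos[of t] hac by (simp add: power2_commute)
    have t0: "a4 - t \<noteq> 0" using t by simp
    define Dt where "Dt = (t - ar)\<^sup>2 + ac\<^sup>2"
    have P1v: "P$1 * Dt = A * (ar\<^sup>2 + ac\<^sup>2 - t * ar)"
      unfolding P_def Ppt_def Dt_def using D0 by simp
    have P2v: "P$2 * Dt = - (A * ac * t)"
      unfolding P_def Ppt_def Dt_def using D0 by simp
    have "(P$1*(t-ar) + P$2*ac) * Dt = (-A*ar) * Dt" using P1v P2v unfolding Dt_def by algebra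
    then have P1r: "P$1*(t-ar) + P$2*ac = -A*ar" using D0 unfolding Dt_def[symmetric] by (rule mult_right_cancel[THEN iffD1, rotated])
    have "(P$2*(t-ar) - P$1*ac) * Dt = (-A*ac) * Dt" using P1v P2v unfolding Dt_def by algebra
    then have P2r: "P$2*(t-ar) - P$1*ac = -A*ac" using D0 unfolding Dt_def[symmetric] by (rule mult_right_cancel[THEN iffD1, rotated])
    have P3r: "P$3*(t-a4) = -C*a4"
      unfolding P_def Ppt_def using t0 by (simp add: field_simps)
    define K where "K = R1\<^sup>2 - 2*(Re p2*(P$1-A) - Im p2*P$2 + p4*(P$3-C)) + (P$1)\<^sup>2 + (P$2)\<^sup>2 + (P$3)\<^sup>2 - A\<^sup>2 - C\<^sup>2 + t\<^sup>2 - 2*t*p5"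
    show ?thesis
    proof (rule exI[of _ "sqrt K"], intro allI impI)
      fix Rot s assume sm: "in_self_motion A C ar ac a4 n d R1 p2 p3 p4 p5 Rot s"
      obtain e1 e2 e3 x y z where n1: "e1\<^sup>2 + e2\<^sup>2 + e3\<^sup>2 = 1"
        and lp: "\<And>t. Rot *v line_pt n d ar t + s = vec3 (x + (t-ar)*e1) (y + (t-ar)*e2) (z + (t-ar)*e3)"
        and h2a: "x + ac*e2 = Re p2" and h2b: "ac*e1 - y = Im p2" and h4: "z + (a4-ar)*e3 = p4"
        and h1: "(x - ar*e1 - A)\<^sup>2 + (y - ar*e2)\<^sup>2 + (z - ar*e3 - C)\<^sup>2 = R1\<^sup>2"
        and h5: "e1*(x + (p5-ar)*e1) + e2*(y + (p5-ar)*e2) + e3*(z + (p5-ar)*e3) = 0"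
        by (rule reduce[OF sm hd]) blast
      have "(dist P (Rot *v line_pt n d ar t + s))\<^sup>2 = K"
        unfolding dist3_sq lp vec3_comp K_def by (rule sph_alg[OF n1 h2a h2b h4 h1 h5 P1r P2r P3r])
      then have "dist P (Rot *v line_pt n d ar t + s) = sqrt K"
        by (metis real_sqrt_abs abs_of_nonneg zero_le_dist)
      then show "Rot *v line_pt n d ar t + s \<in> sphere (Ppt A C ar ac a4 t) (sqrt K)"
        by (simp add: P_def)
    qed
  qed
  have part3: "\<exists>\<rho>. \<forall>Rot s. in_self_motion A C ar ac a4 n d R1 p2 p3 p4 p5 Rot s \<longrightarrow>
           (Rot *v line_pt n d ar a4 + s) $ 3 = p4 \<and>
           dist (Rot *v line_pt n d ar a4 + s) (center_pt A C ar ac a4) \<le> \<rho>"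
  proof (rule exI[of _ "sqrt ((a4-ar)\<^sup>2 + ac\<^sup>2)"], intro allI impI)
    fix Rot s assume sm: "in_self_motion A C ar ac a4 n d R1 p2 p3 p4 p5 Rot s"
    obtain e1 e2 e3 x y z where n1: "e1\<^sup>2 + e2\<^sup>2 + e3\<^sup>2 = 1"
      and lp: "\<And>t. Rot *v line_pt n d ar t + s = vec3 (x + (t-ar)*e1) (y + (t-ar)*e2) (z + (t-ar)*e3)"
      and h2a: "x + ac*e2 = Re p2" and h2b: "ac*e1 - y = Im p2" and h4: "z + (a4-ar)*e3 = p4"
      and h1: "(x - ar*e1 - A)\<^sup>2 + (y - ar*e2)\<^sup>2 + (z - ar*e3 - C)\<^sup>2 = R1\<^sup>2"
      and h5: "e1*(x + (p5-ar)*e1) + e2*(y + (p5-ar)*e2) + e3*(z + (p5-ar)*e3) = 0"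
      by (rule reduce[OF sm hd]) blast
    have "(dist (Rot *v line_pt n d ar a4 + s) (center_pt A C ar ac a4))\<^sup>2
        = (x + (a4-ar)*e1 - Re p2)\<^sup>2 + (y + (a4-ar)*e2 - - Im p2)\<^sup>2 + (z + (a4-ar)*e3 - p4)\<^sup>2"
      unfolding dist3_sq lp cen vec3_comp ..
    also have "\<dots> = ((a4-ar)\<^sup>2 + ac\<^sup>2) * (e1\<^sup>2 + e2\<^sup>2)"
      unfolding h2a[symmetric] h2b[symmetric] h4[symmetric] by (simp add: power2_eq_square algebra_simps)
    also have "\<dots> \<le> ((a4-ar)\<^sup>2 + ac\<^sup>2) * 1"
      using n1 zero_le_power2[of e3] by (intro mult_left_mono) (linarith, auto simp: add_nonneg_nonneg)
    finally have "(dist (Rot *v line_pt n d ar a4 + s) (center_pt A C ar ac a4))\<^sup>2 \<le> (a4-ar)\<^sup>2 + ac\<^sup>2" by simp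
    then have "dist (Rot *v line_pt n d ar a4 + s) (center_pt A C ar ac a4) \<le> sqrt ((a4-ar)\<^sup>2 + ac\<^sup>2)"
      by (rule real_le_rsqrt)
    moreover have "(Rot *v line_pt n d ar a4 + s) $ 3 = p4" unfolding lp using h4 by simp
    ultimately show "(Rot *v line_pt n d ar a4 + s) $ 3 = p4 \<and>
           dist (Rot *v line_pt n d ar a4 + s) (center_pt A C ar ac a4) \<le> sqrt ((a4-ar)\<^sup>2 + ac\<^sup>2)" by simp
  qed
  have esph: "(\<exists>ctr r. rot_ellipsoid (center_pt A C ar ac a4) \<bar>a4 - t\<bar> (sqrt ((ar - t)\<^sup>2 + ac\<^sup>2))
                        = sphere ctr r) \<longleftrightarrow> (a4 - t)\<^sup>2 = (ar - t)\<^sup>2 + ac\<^sup>2" if t: "t \<noteq> a4" for t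
  proof -
    have "(\<exists>ctr r. rot_ellipsoid (center_pt A C ar ac a4) \<bar>a4 - t\<bar> (sqrt ((ar - t)\<^sup>2 + ac\<^sup>2))
                        = sphere ctr r) \<longleftrightarrow> \<bar>a4 - t\<bar> = sqrt ((ar - t)\<^sup>2 + ac\<^sup>2)"
      by (rule ell_sphere) (use t rpos[of t] in auto)
    also have "\<dots> \<longleftrightarrow> sqrt ((a4 - t)\<^sup>2) = sqrt ((ar - t)\<^sup>2 + ac\<^sup>2)" by simp
    also have "\<dots> \<longleftrightarrow> (a4 - t)\<^sup>2 = (ar - t)\<^sup>2 + ac\<^sup>2" by (rule real_sqrt_eq_iff)
    finally show ?thesis .
  qed
  have part4: "t = (a4\<^sup>2 - ac\<^sup>2 - ar\<^sup>2) / (2 * (a4 - ar)) \<longleftrightarrow> (a4 - t)\<^sup>2 = (ar - t)\<^sup>2 + ac\<^sup>2"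
    if "a4 \<noteq> ar" for t
  proof -
    have "(a4 - t)\<^sup>2 = (ar - t)\<^sup>2 + ac\<^sup>2 \<longleftrightarrow> t * (2 * (a4 - ar)) = a4\<^sup>2 - ac\<^sup>2 - ar\<^sup>2"
      by (simp add: power2_eq_square algebra_simps) (auto simp: algebra_simps)
    also have "\<dots> \<longleftrightarrow> t = (a4\<^sup>2 - ac\<^sup>2 - ar\<^sup>2) / (2 * (a4 - ar))"
      using that by (simp add: eq_divide_eq)
    finally show ?thesis by simp
  qed
  have part5: "(a4 - t)\<^sup>2 \<noteq> (ar - t)\<^sup>2 + ac\<^sup>2" if "a4 = ar" for t
    using that hac by simp
  show ?thesis using ell sph part3 esph part4 part5 by auto
qed

end
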